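(* Let $A$ be a set with a ternary operation $p\colon A^3\to A$ and two constants $0,1\in A$ satisfying, for all $a,b,c,b_1,b_2,b_3\in A$: (T1) $p(0,a,1)=a$; (T2) $p(a,b,a)=a$; (T3) $p(a,p(b_1,b_2,b_3),c)=p(p(a,b_1,c),b_2,p(a,b_3,c))$; (T4) $p(a,0,b)=a=p(b,1,a)$. Define $\bar{a}=p(1,a,0)$, $a\cdot b=p(0,a,b)$ and $a+b=p(a,b,\bar a)$. Then the following conditions are equivalent: (i) $(A,+,\cdot,0,1)$ is a unitary ring of characteristic $2$; (ii) $p(a,b,c)=(\bar b\cdot a)+(b\cdot c)$ for all $a,b,c\in A$; (iii) $a\cdot(b+c)=(a\cdot b)+(a\cdot c)$ for all $a,b,c\in A$.
   Context: A unitary ring of characteristic $2$ here means an associative ring with additive identity $0$ and multiplicative identity $1$ (not necessarily commutative) such that $b+b=0$ for all elements $b$. *)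

theory Defs
  imports Main
begin

definition unitary_ring_char2 ::
  "'a set \<Rightarrow> ('a \<Rightarrow> 'a \<Rightarrow> 'a) \<Rightarrow> ('a \<Rightarrow> 'a \<Rightarrow> 'a) \<Rightarrow> 'a \<Rightarrow> 'a \<Rightarrow> bool" where
  "unitary_ring_char2 A add mul z u \<longleftrightarrow>
     z \<in> A \<and> u \<in> A \<and>
     (\<forall>a\<in>A. \<forall>b\<in>A. add a b \<in> A \<and> mul a b \<in> A) \<and>
     (\<forall>a\<in>A. \<forall>b\<in>A. \<forall>c\<in>A. add (add a b) c = add a (add b c)) \<and>
     (\<forall>a\<in>A. \<forall>b\<in>A. add a b = add b a) \<and>
     (\<forall>a\<in>A. add z a = a) \<and>
     (\<forall>a\<in>A. \<exists>b\<in>A. add a b = z) \<and>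
     (\<forall>a\<in>A. \<forall>b\<in>A. \<forall>c\<in>A. mul (mul a b) c = mul a (mul b c)) \<and>
     (\<forall>a\<in>A. mul u a = a \<and> mul a u = a) \<and>
     (\<forall>a\<in>A. \<forall>b\<in>A. \<forall>c\<in>A. mul a (add b c) = add (mul a b) (mul a c)) \<and>
     (\<forall>a\<in>A. \<forall>b\<in>A. \<forall>c\<in>A. mul (add a b) c = add (mul a c) (mul b c)) \<and>
     (\<forall>b\<in>A. add b b = z)"

end

theory Submission imports Defs begin
locale tern = fixes A :: "'a set" and p :: "'a \<Rightarrow> 'a \<Rightarrow> 'a \<Rightarrow> 'a" and z u :: 'a
  assumes cl: "\<lbrakk>a\<in>A; b\<in>A; c\<in>A\<rbrakk> \<Longrightarrow> p a b c \<in> A"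
  and z_in: "z\<in>A" and u_in: "u\<in>A"
  and t1: "a\<in>A \<Longrightarrow> p z a u = a"
  and t2: "a\<in>A \<Longrightarrow> b\<in>A \<Longrightarrow> p a b a = a"
  and t3: "a\<in>A \<Longrightarrow> b1\<in>A \<Longrightarrow> b2\<in>A \<Longrightarrow> b3\<in>A \<Longrightarrow> c\<in>A \<Longrightarrow> p a (p b1 b2 b3) c = p (p a b1 c) b2 (p a b3 c)"
  and t4a: "a\<in>A \<Longrightarrow> b\<in>A \<Longrightarrow> p a z b = a"
  and t4b: "a\<in>A \<Longrightarrow> b\<in>A \<Longrightarrow> p b u a = a"
begin
lemma l1: "x\<in>A \<Longrightarrow> y\<in>A \<Longrightarrow> w\<in>A \<Longrightarrow> p x (p u y z) w = p w y x"
  by (metis t3 t4a t4b cl z_in u_in)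
lemma l2: "x\<in>A \<Longrightarrow> y\<in>A \<Longrightarrow> v\<in>A \<Longrightarrow> w\<in>A \<Longrightarrow> p x (p z y v) w = p x y (p x v w)"
  by (metis t3 t4a cl z_in u_in)
lemma l3: "x\<in>A \<Longrightarrow> y\<in>A \<Longrightarrow> v\<in>A \<Longrightarrow> w\<in>A \<Longrightarrow> p x (p y v z) w = p (p x y w) v x"
  by (metis t3 t4a cl z_in u_in)
lemma G: "a\<in>A \<Longrightarrow> x\<in>A \<Longrightarrow> y\<in>A \<Longrightarrow> p a x (p a y (p u a z)) = p a (p z x y) (p u a z)"
  by (metis t3 t4a cl z_in u_in)
lemma F3: "a\<in>A \<Longrightarrow> b\<in>A \<Longrightarrow> p z (p u b z) a = p a b z"
  by (metis t3 t4a t4b cl z_in u_in)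
lemma l4: "x\<in>A \<Longrightarrow> p u (p u x z) z = x"
  by (metis t3 t4a t4b t1 cl z_in u_in)
end
locale tern2 = tern + assumes h2: "a\<in>A \<Longrightarrow> b\<in>A \<Longrightarrow> c\<in>A \<Longrightarrow> p a b c = p (p z (p u b z) a) (p z b c) (p u (p z (p u b z) a) z)"
begin
lemma c2_f21: assumes "x3 \<in> A" and "x6 \<in> A" and "x4 \<in> A" and "x5 \<in> A" shows "(p x3 (p u x5 x6) x4) = (p x4 x5 (p x3 x6 x4))"
  using assms by (metis t3 t4b cl z_in u_in)
lemma c2_f22: assumes "x10 \<in> A" and "x8 \<in> A" and "x9 \<in> A" and "x7 \<in> A" shows "(p x7 (p z x9 x10) x8) = (p x7 x9 (p x7 x10 x8))"
  using assms by (metis t3 t4a cl z_in u_in)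
lemma c2_f27: assumes "x10 \<in> A" and "x8 \<in> A" and "x9 \<in> A" and "x7 \<in> A" shows "(p x7 (p x9 x10 z) x8) = (p (p x7 x9 x8) x10 x7)"
  using assms by (metis t3 t4a cl z_in u_in)
lemma c2_f55: assumes "x10 \<in> A" and "x8 \<in> A" and "x9 \<in> A" shows "(p x8 (p u x10 z) x9) = (p x9 x10 x8)"
  using assms by (metis c2_f21 t4a cl z_in u_in)
lemma c2_f216: assumes "x0 \<in> A" and "x1 \<in> A" shows "(p u x0 x1) = (p (p u x0 z) (p z x0 x1) (p u (p u x0 z) z))"
  using assms by (metis h2 t1 cl z_in u_in)
lemma c2_f295: assumes "x0 \<in> A" and "x1 \<in> A" shows "(p u x0 x1) = (p (p u x0 z) (p z x0 x1) (p z x0 (p u z z)))"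
  using assms by (metis c2_f216 c2_f21 cl z_in u_in)
lemma c2_f296: assumes "x0 \<in> A" and "x1 \<in> A" shows "(p u x0 x1) = (p (p u x0 z) (p z x0 x1) (p z x0 u))"
  using assms by (metis c2_f295 t4a cl z_in u_in)
lemma c2_f297: assumes "x0 \<in> A" and "x1 \<in> A" shows "(p u x0 x1) = (p (p u x0 z) (p z x0 x1) x0)"
  using assms by (metis c2_f296 t1 cl z_in u_in)
lemma c2_f387: assumes "x0 \<in> A" shows "(p u x0 u) = (p (p u x0 z) x0 x0)"
  using assms by (metis c2_f297 t1 cl z_in u_in)
lemma c2_f397: assumes "x5 \<in> A" shows "(p u (p u (p z u x5) z) z) = (p u u x5)"
  using assms by (metis c2_f297 c2_f27 cl z_in u_in)
lemma c2_f416: assumes "x0 \<in> A" shows "u = (p (p u x0 z) x0 x0)"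
  using assms by (metis c2_f387 t2 cl z_in u_in)
lemma c2_f432: assumes "x5 \<in> A" shows "(p u (p u (p z u x5) z) z) = x5"
  using assms by (metis c2_f397 t4b cl z_in u_in)
lemma c2_f433: assumes "x5 \<in> A" shows "(p u (p u u (p u x5 z)) z) = x5"
  using assms by (metis c2_f432 c2_f22 cl z_in u_in)
lemma c2_f434: assumes "x5 \<in> A" shows "(p u (p u x5 z) z) = x5"
  using assms by (metis c2_f433 t4b cl z_in u_in)
lemma c2_f448: assumes "x0 \<in> A" shows "u = (p u (p (p u x0 z) (p u x0 z) x0) z)"
  using assms by (metis c2_f416 t3 cl z_in u_in)
lemma c2_f465: assumes "x0 \<in> A" shows "u = (p u (p x0 x0 (p u x0 z)) z)"
  using assms by (metis c2_f448 c2_f55 cl z_in u_in)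
lemma c2_f572: assumes "x9 \<in> A" shows "(p u u z) = (p x9 x9 (p u x9 z))"
  using assms by (metis c2_f434 c2_f465 cl z_in u_in)
lemma c2_f600: assumes "x9 \<in> A" shows "z = (p x9 x9 (p u x9 z))"
  using assms by (metis c2_f572 t4b cl z_in u_in)
lemma c2_f632: shows "z = z"
  by (metis  cl z_in u_in)
lemma c2_f13: assumes "sk0 \<in> A" shows "z = (p sk0 sk0 (p u sk0 z))"
  using assms by (metis c2_f632 c2_f600 cl z_in u_in)
lemma char2: "x \<in> A \<Longrightarrow> p x x (p u x z) = z" by (metis c2_f13)
lemma a2_f146: assumes "x16 \<in> A" and "x14 \<in> A" and "x15 \<in> A" and "x12 \<in> A" and "x13 \<in> A" shows "(p x12 (p x15 x16 (p u x13 z)) x14) = (p (p x12 x15 x14) x16 (p x14 x13 x12))"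
  using assms by (metis t3 l1 cl z_in u_in)
lemma a2_f150: assumes "x34 \<in> A" and "x32 \<in> A" and "x33 \<in> A" shows "(p u (p x33 x34 (p u x32 z)) z) = (p (p u x33 z) x34 x32)"
  using assms by (metis t3 l4 cl z_in u_in)
lemma a2_f4778: assumes "sk0 \<in> A" and "sk1 \<in> A" and "sk2 \<in> A" shows "(p sk0 (p sk1 sk2 (p u sk1 z)) (p u sk0 z)) = (p (p sk0 sk1 (p u sk0 z)) sk2 (p (p u sk0 z) sk1 sk0))"
  using assms by (metis a2_f146 cl z_in u_in)
lemma a2_f21: assumes "sk0 \<in> A" and "sk1 \<in> A" and "sk2 \<in> A" shows "(p (p sk0 sk1 (p u sk0 z)) sk2 (p u (p sk0 sk1 (p u sk0 z)) z)) = (p sk0 (p sk1 sk2 (p u sk1 z)) (p u sk0 z))"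
  using assms by (metis a2_f4778 a2_f150 cl z_in u_in)
lemma assoc2: "a \<in> A \<Longrightarrow> b \<in> A \<Longrightarrow> c \<in> A \<Longrightarrow> p (p a b (p u a z)) c (p u (p a b (p u a z)) z) = p a (p b c (p u b z)) (p u a z)" by (metis a2_f21)
lemma m2_f34: assumes "x2 \<in> A" and "x0 \<in> A" and "x1 \<in> A" shows "(p x0 x1 x2) = (p (p x0 x1 z) (p z x1 x2) (p u (p x0 x1 z) z))"
  using assms by (metis h2 l1 cl z_in u_in)
lemma m2_f121: assumes "x34 \<in> A" and "x32 \<in> A" and "x33 \<in> A" shows "(p u (p (p u x32 z) x33 x34) z) = (p x32 x33 (p u x34 z))"
  using assms by (metis t3 l4 cl z_in u_in)
lemma m2_f127: assumes "x16 \<in> A" and "x14 \<in> A" and "x15 \<in> A" and "x12 \<in> A" and "x13 \<in> A" shows "(p x12 (p x15 x16 (p u x13 z)) x14) = (p (p x12 x15 x14) x16 (p x14 x13 x12))"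
  using assms by (metis t3 l1 cl z_in u_in)
lemma m2_f131: assumes "x34 \<in> A" and "x32 \<in> A" and "x33 \<in> A" shows "(p u (p x33 x34 (p u x32 z)) z) = (p (p u x33 z) x34 x32)"
  using assms by (metis t3 l4 cl z_in u_in)
lemma m2_f176: assumes "x14 \<in> A" and "x13 \<in> A" shows "(p u (p u x13 z) x14) = (p x13 (p z (p u x13 z) x14) (p u x13 z))"
  using assms by (metis m2_f34 l4 cl z_in u_in)
lemma m2_f178: assumes "x0 \<in> A" and "x1 \<in> A" shows "(p u x0 x1) = (p (p u x0 z) (p z x0 x1) x0)"
  using assms by (metis m2_f34 l4 cl z_in u_in)
lemma m2_f205: assumes "x14 \<in> A" and "x13 \<in> A" shows "(p u (p u x13 z) x14) = (p x13 (p x14 x13 z) (p u x13 z))"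
  using assms by (metis m2_f176 l1 cl z_in u_in)
lemma m2_f206: assumes "x14 \<in> A" and "x13 \<in> A" shows "(p x13 (p x14 x13 z) (p u x13 z)) = (p x14 x13 u)"
  using assms by (metis m2_f205 l1 cl z_in u_in)
lemma m2_f392: assumes "x0 \<in> A" shows "(p u x0 u) = (p (p u x0 z) x0 x0)"
  using assms by (metis m2_f178 t1 cl z_in u_in)
lemma m2_f426: assumes "x0 \<in> A" shows "u = (p (p u x0 z) x0 x0)"
  using assms by (metis m2_f392 t2 cl z_in u_in)
lemma m2_f1036: assumes "x10 \<in> A" and "x11 \<in> A" and "x9 \<in> A" shows "(p (p u x9 z) (p x10 x11 x9) x9) = (p (p (p u x9 z) x10 x9) x11 u)"
  using assms by (metis t3 m2_f426 cl z_in u_in)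
lemma m2_f1102: assumes "x50 \<in> A" and "x51 \<in> A" and "x49 \<in> A" shows "(p u (p (p u x49 z) x50 x51) u) = (p (p (p u x49 z) x50 x51) (p x49 x50 (p u x51 z)) (p x49 x50 (p u x51 z)))"
  using assms by (metis m2_f206 m2_f121 cl z_in u_in)
lemma m2_f1145: assumes "x50 \<in> A" and "x51 \<in> A" and "x49 \<in> A" shows "u = (p (p (p u x49 z) x50 x51) (p x49 x50 (p u x51 z)) (p x49 x50 (p u x51 z)))"
  using assms by (metis m2_f1102 t2 cl z_in u_in)
lemma m2_f1173: assumes "x51 \<in> A" shows "(p u u z) = (p (p u (p u (p u x51 z) z) z) (p u x51 z) x51)"
  using assms by (metis m2_f131 m2_f426 cl z_in u_in)
lemma m2_f1227: assumes "x51 \<in> A" shows "(p u u z) = (p (p u x51 z) (p u x51 z) x51)"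
  using assms by (metis m2_f1173 l4 cl z_in u_in)
lemma m2_f1228: assumes "x51 \<in> A" shows "z = (p (p u x51 z) (p u x51 z) x51)"
  using assms by (metis m2_f1227 t4b cl z_in u_in)
lemma m2_f131858: assumes "x3 \<in> A" and "x4 \<in> A" shows "u = (p (p u x3 z) (p x4 (p x3 x4 (p u x3 z)) (p u x4 z)) x3)"
  using assms by (metis m2_f1145 m2_f127 cl z_in u_in)
lemma m2_f210446: assumes "x3 \<in> A" and "x4 \<in> A" shows "(p z x4 u) = (p (p u x3 z) (p (p u x3 z) x4 x3) x3)"
  using assms by (metis m2_f1036 m2_f1228 cl z_in u_in)
lemma m2_f211494: assumes "x3 \<in> A" and "x4 \<in> A" shows "(p (p u x3 z) (p (p u x3 z) x4 x3) x3) = x4"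
  using assms by (metis m2_f210446 t1 cl z_in u_in)
lemma m2_f254111: assumes "x46 \<in> A" and "x45 \<in> A" shows "(p x45 (p x45 x46 (p u x45 z)) (p u x45 z)) = x46"
  using assms by (metis m2_f211494 l4 cl z_in u_in)
lemma m2_f305667: assumes "x4 \<in> A" and "x5 \<in> A" shows "(p (p u x4 z) u x4) = (p x5 (p x4 x5 (p u x4 z)) (p u x5 z))"
  using assms by (metis m2_f211494 m2_f131858 cl z_in u_in)
lemma m2_f306541: assumes "x4 \<in> A" and "x5 \<in> A" shows "(p x5 (p x4 x5 (p u x4 z)) (p u x5 z)) = x4"
  using assms by (metis m2_f305667 t4b cl z_in u_in)
lemma m2_f679464: assumes "x31 \<in> A" and "x32 \<in> A" shows "(p x31 x32 (p u x31 z)) = (p x32 x31 (p u x32 z))"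
  using assms by (metis m2_f254111 m2_f306541 cl z_in u_in)
lemma m2_f23: assumes "sk0 \<in> A" and "sk1 \<in> A" shows "(p sk0 sk1 (p u sk0 z)) = (p sk1 sk0 (p u sk1 z))"
  using assms by (metis m2_f679464 cl z_in u_in)
lemma m2_f22: assumes "sk0 \<in> A" and "sk1 \<in> A" shows "(p sk0 sk1 (p u sk0 z)) = (p sk1 sk0 (p u sk1 z))"
  using assms by (metis m2_f23 cl z_in u_in)
lemma comm2: "a \<in> A \<Longrightarrow> b \<in> A \<Longrightarrow> p a b (p u a z) = p b a (p u b z)" by (metis m2_f22)
lemma canc2: "a \<in> A \<Longrightarrow> c \<in> A \<Longrightarrow> p a (p a c (p u a z)) (p u a z) = c"
  by (metis assoc2 char2 t1 t4a cl z_in u_in)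
lemma barmul2: "a \<in> A \<Longrightarrow> b \<in> A \<Longrightarrow> p z (p u b z) a = p a (p z b a) (p u a z)"
  by (metis F3 char2 G cl z_in u_in)
lemma ldist2: "x \<in> A \<Longrightarrow> a \<in> A \<Longrightarrow> c \<in> A \<Longrightarrow> p z x (p a c (p u a z)) = p (p z x a) (p z x c) (p u (p z x a) z)"
proof -
  assume xa: "x \<in> A" "a \<in> A" "c \<in> A"
  let ?y = "p a c (p u a z)"
  have yA: "?y \<in> A" using xa by (simp add: cl z_in u_in)
  have xaA: "p z x a \<in> A" "p z x c \<in> A" using xa by (simp_all add: cl z_in u_in)
  have "p a x c = p a x (p a ?y (p u a z))" using canc2[of a c] xa by simp
  also have "\<dots> = p a (p z x ?y) (p u a z)" using G[of a x ?y] xa yA by simp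
  finally have e1: "p a x c = p a (p z x ?y) (p u a z)" .
  have "p a x c = p (p z (p u x z) a) (p z x c) (p u (p z (p u x z) a) z)" by (rule h2[OF xa(2) xa(1) xa(3)])
  also have "p z (p u x z) a = p a (p z x a) (p u a z)" by (rule barmul2[OF xa(2) xa(1)])
  also have "p (p a (p z x a) (p u a z)) (p z x c) (p u (p a (p z x a) (p u a z)) z) = p a (p (p z x a) (p z x c) (p u (p z x a) z)) (p u a z)"
    by (rule assoc2[OF xa(2) xaA])
  finally have e2: "p a x c = p a (p (p z x a) (p z x c) (p u (p z x a) z)) (p u a z)" .
  have "p z x ?y = p a (p a (p z x ?y) (p u a z)) (p u a z)" using canc2[of a "p z x ?y"] xa yA by (simp add: cl z_in)
  also have "\<dots> = p a (p a (p (p z x a) (p z x c) (p u (p z x a) z)) (p u a z)) (p u a z)"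
    using e1 e2 by simp
  also have "\<dots> = p (p z x a) (p z x c) (p u (p z x a) z)" using canc2[of a "p (p z x a) (p z x c) (p u (p z x a) z)"] xa xaA by (simp add: cl z_in u_in)
  finally show ?thesis .
qed
lemma rdist2: "a \<in> A \<Longrightarrow> b \<in> A \<Longrightarrow> c \<in> A \<Longrightarrow> p z (p a b (p u a z)) c = p (p z a c) (p z b c) (p u (p z a c) z)"
proof -
  assume ab: "a \<in> A" "b \<in> A" "c \<in> A"
  have acA: "p z a c \<in> A" using ab by (simp add: cl z_in)
  have "p z (p a b (p u a z)) c = p (p z a c) b (p z (p u a z) c)" using t3[of z a b "p u a z" c] ab by (simp add: cl z_in u_in)
  also have "p z (p u a z) c = p c (p z a c) (p u c z)" by (rule barmul2[OF ab(3) ab(1)])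
  also have "\<dots> = p (p z a c) c (p u (p z a c) z)" by (rule comm2[OF ab(3) acA])
  also have "p (p z a c) b (p (p z a c) c (p u (p z a c) z)) = p (p z a c) (p z b c) (p u (p z a c) z)"
    by (rule G[OF acA ab(2) ab(3)])
  finally show ?thesis .
qed
lemma ring2: "unitary_ring_char2 A (\<lambda>a b. p a b (p u a z)) (\<lambda>a b. p z a b) z u"
  unfolding unitary_ring_char2_def
proof (intro conjI ballI)
  show "z \<in> A" "u \<in> A" by (fact z_in, fact u_in)
  fix a assume a: "a \<in> A"
  show "p z a (p u z z) = a" using a by (simp add: t4a t1 z_in u_in)
  show "\<exists>b\<in>A. p a b (p u a z) = z" using a char2 by blast
  show "p z u a = a" "p z a u = a" using a by (simp_all add: t4b t1 z_in)
  show "p a a (p u a z) = z" by (rule char2[OF a])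
  fix b assume b: "b \<in> A"
  show "p a b (p u a z) \<in> A" "p z a b \<in> A" using a b by (simp_all add: cl z_in u_in)
  show "p a b (p u a z) = p b a (p u b z)" by (rule comm2[OF a b])
  fix c assume c: "c \<in> A"
  show "p (p a b (p u a z)) c (p u (p a b (p u a z)) z) = p a (p b c (p u b z)) (p u a z)" by (rule assoc2[OF a b c])
  show "p z (p z a b) c = p z a (p z b c)" using t3[of z z a b c] a b c by (simp add: t4a z_in)
  show "p z a (p b c (p u b z)) = p (p z a b) (p z a c) (p u (p z a b) z)" by (rule ldist2[OF a b c])
  show "p z (p a b (p u a z)) c = p (p z a c) (p z b c) (p u (p z a c) z)" by (rule rdist2[OF a b c])
qed
end
locale tern3 = tern + assumes h3: "a\<in>A \<Longrightarrow> b\<in>A \<Longrightarrow> c\<in>A \<Longrightarrow> p z a (p b c (p u b z)) = p (p z a b) (p z a c) (p u (p z a b) z)"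
begin
lemma c3_f1025: assumes "x0 \<in> A" and "x1 \<in> A" shows "(p z x0 (p u x1 (p u u z))) = (p x0 (p z x0 x1) (p u x0 z))"
  using assms by (metis h3 t1 cl z_in u_in)
lemma c3_f1090: assumes "x0 \<in> A" and "x1 \<in> A" shows "(p z x0 (p u x1 z)) = (p x0 (p z x0 x1) (p u x0 z))"
  using assms by (metis c3_f1025 t4b cl z_in u_in)
lemma c3_f1493: assumes "x0 \<in> A" shows "(p x0 x0 (p u x0 z)) = (p z x0 (p u u z))"
  using assms by (metis c3_f1090 t1 cl z_in u_in)
lemma c3_f1546: assumes "x0 \<in> A" shows "(p x0 x0 (p u x0 z)) = (p z x0 z)"
  using assms by (metis c3_f1493 t4b cl z_in u_in)
lemma c3_f1547: assumes "x0 \<in> A" shows "z = (p x0 x0 (p u x0 z))"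
  using assms by (metis c3_f1546 t2 cl z_in u_in)
lemma c3_f1719: shows "z = z"
  by (metis  cl z_in u_in)
lemma c3_f21: assumes "sk0 \<in> A" shows "z = (p sk0 sk0 (p u sk0 z))"
  using assms by (metis c3_f1719 c3_f1547 cl z_in u_in)
lemma char3: "x \<in> A \<Longrightarrow> p x x (p u x z) = z" by (metis c3_f21)
lemma k3_f49: assumes "x10 \<in> A" and "x11 \<in> A" and "x9 \<in> A" and "x12 \<in> A" shows "(p x9 (p (p u x10 z) x12 z) x11) = (p (p x11 x10 x9) x12 x9)"
  using assms by (metis l3 l1 cl z_in u_in)
lemma k3_f51: assumes "x16 \<in> A" and "x15 \<in> A" shows "(p u (p (p u x15 z) x16 z) z) = (p x15 x16 u)"
  using assms by (metis l3 l4 cl z_in u_in)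
lemma k3_f79: assumes "x10 \<in> A" and "x11 \<in> A" and "x9 \<in> A" and "x12 \<in> A" shows "(p x9 (p z x12 (p u x10 z)) x11) = (p x9 x12 (p x11 x10 x9))"
  using assms by (metis l2 l1 cl z_in u_in)
lemma k3_f112: assumes "x6 \<in> A" and "x7 \<in> A" and "x4 \<in> A" and "x5 \<in> A" shows "(p x4 (p u x6 x7) x5) = (p x5 x6 (p x4 x7 x5))"
  using assms by (metis t3 t4b cl z_in u_in)
lemma k3_f118: assumes "x34 \<in> A" and "x32 \<in> A" and "x33 \<in> A" shows "(p u (p (p u x32 z) x33 x34) z) = (p x32 x33 (p u x34 z))"
  using assms by (metis t3 l4 cl z_in u_in)
lemma k3_f122: assumes "x6 \<in> A" and "x7 \<in> A" and "x4 \<in> A" and "x5 \<in> A" shows "(p x4 (p x6 x7 u) x5) = (p (p x4 x6 x5) x7 x5)"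
  using assms by (metis t3 t4b cl z_in u_in)
lemma k3_f128: assumes "x34 \<in> A" and "x32 \<in> A" and "x33 \<in> A" shows "(p u (p x33 x34 (p u x32 z)) z) = (p (p u x33 z) x34 x32)"
  using assms by (metis t3 l4 cl z_in u_in)
lemma k3_f192: assumes "x0 \<in> A" and "x1 \<in> A" shows "(p z x0 (p u x1 (p u u z))) = (p x0 (p z x0 x1) (p u x0 z))"
  using assms by (metis h3 t1 cl z_in u_in)
lemma k3_f220: assumes "x0 \<in> A" and "x1 \<in> A" shows "(p z x0 (p u x1 z)) = (p x0 (p z x0 x1) (p u x0 z))"
  using assms by (metis k3_f192 t4b cl z_in u_in)
lemma k3_f1454: assumes "x0 \<in> A" shows "(p z x0 (p u u z)) = (p x0 x0 (p u x0 z))"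
  using assms by (metis k3_f220 t1 cl z_in u_in)
lemma k3_f1482: assumes "x8 \<in> A" and "x7 \<in> A" shows "(p x7 x7 (p (p u x7 z) x8 x7)) = (p z x7 (p u (p u x8 z) z))"
  using assms by (metis k3_f220 k3_f79 cl z_in u_in)
lemma k3_f1506: assumes "x58 \<in> A" and "x59 \<in> A" shows "(p x58 (p z (p u x58 z) x59) (p u (p u (p u x58 z) z) z)) = (p u (p z (p u x58 z) (p u x59 z)) z)"
  using assms by (metis k3_f118 k3_f220 cl z_in u_in)
lemma k3_f1507: assumes "x0 \<in> A" shows "(p x0 x0 (p u x0 z)) = (p z x0 z)"
  using assms by (metis k3_f1454 t4b cl z_in u_in)
lemma k3_f1508: assumes "x0 \<in> A" shows "z = (p x0 x0 (p u x0 z))"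
  using assms by (metis k3_f1507 t2 cl z_in u_in)
lemma k3_f1573: assumes "x8 \<in> A" and "x7 \<in> A" shows "(p z x7 x8) = (p x7 x7 (p (p u x7 z) x8 x7))"
  using assms by (metis k3_f1482 l4 cl z_in u_in)
lemma k3_f1634: assumes "x58 \<in> A" and "x59 \<in> A" shows "(p x58 (p z (p u x58 z) x59) (p u (p u (p u x58 z) z) z)) = (p (p u z z) (p u x58 z) x59)"
  using assms by (metis k3_f1506 k3_f128 cl z_in u_in)
lemma k3_f1635: assumes "x58 \<in> A" and "x59 \<in> A" shows "(p x58 (p z (p u x58 z) x59) (p u (p u (p u x58 z) z) z)) = (p x59 x58 (p u z z))"
  using assms by (metis k3_f1634 l1 cl z_in u_in)
lemma k3_f1636: assumes "x58 \<in> A" and "x59 \<in> A" shows "(p x58 (p z (p u x58 z) x59) (p u (p u (p u x58 z) z) z)) = (p x59 x58 u)"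
  using assms by (metis k3_f1635 t4a cl z_in u_in)
lemma k3_f1637: assumes "x58 \<in> A" and "x59 \<in> A" shows "(p x59 x58 u) = (p x58 (p z (p u x58 z) x59) (p u x58 z))"
  using assms by (metis k3_f1636 l4 cl z_in u_in)
lemma k3_f1638: assumes "x58 \<in> A" and "x59 \<in> A" shows "(p x59 x58 u) = (p x58 (p x59 x58 z) (p u x58 z))"
  using assms by (metis k3_f1637 l1 cl z_in u_in)
lemma k3_f1664: assumes "x8 \<in> A" and "x6 \<in> A" and "x7 \<in> A" shows "(p x6 (p x6 x7 x8) (p u x6 z)) = (p z x7 (p x6 x8 (p u x6 z)))"
  using assms by (metis t3 k3_f1508 cl z_in u_in)
lemma k3_f3940: assumes "x2 \<in> A" and "x3 \<in> A" shows "(p z x2 x3) = (p (p u x2 z) (p u x2 x3) x2)"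
  using assms by (metis k3_f1573 k3_f112 cl z_in u_in)
lemma k3_f9427: assumes "x10 \<in> A" and "x11 \<in> A" shows "(p (p (p u x10 z) x11 x10) x10 x10) = (p (p u x11 z) x10 u)"
  using assms by (metis k3_f1638 k3_f49 cl z_in u_in)
lemma k3_f9593: assumes "x10 \<in> A" and "x11 \<in> A" shows "(p (p (p u x10 z) x11 x10) x10 x10) = (p u (p x11 x10 z) z)"
  using assms by (metis k3_f9427 l3 cl z_in u_in)
lemma k3_f13350: assumes "x8 \<in> A" and "x9 \<in> A" shows "(p z (p u x8 z) x9) = (p x8 (p u (p u x8 z) x9) (p u x8 z))"
  using assms by (metis k3_f3940 l4 cl z_in u_in)
lemma k3_f13484: assumes "x8 \<in> A" and "x9 \<in> A" shows "(p z (p u x8 z) x9) = (p x8 (p x9 x8 u) (p u x8 z))"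
  using assms by (metis k3_f13350 l1 cl z_in u_in)
lemma k3_f13485: assumes "x8 \<in> A" and "x9 \<in> A" shows "(p x9 x8 z) = (p x8 (p x9 x8 u) (p u x8 z))"
  using assms by (metis k3_f13484 l1 cl z_in u_in)
lemma k3_f100203: assumes "x36 \<in> A" and "x37 \<in> A" shows "(p u (p (p u x37 z) x36 z) z) = (p (p x36 x37 (p u x36 z)) x36 x36)"
  using assms by (metis k3_f9593 l1 cl z_in u_in)
lemma k3_f100341: assumes "x36 \<in> A" and "x37 \<in> A" shows "(p x37 x36 u) = (p (p x36 x37 (p u x36 z)) x36 x36)"
  using assms by (metis k3_f100203 k3_f51 cl z_in u_in)
lemma k3_f101517: assumes "x11 \<in> A" and "x12 \<in> A" shows "(p (p x12 x11 u) x11 u) = (p (p x12 x11 z) x11 x11)"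
  using assms by (metis k3_f100341 k3_f13485 cl z_in u_in)
lemma k3_f101904: assumes "x11 \<in> A" and "x12 \<in> A" shows "(p (p x12 x11 z) x11 x11) = (p x12 (p x11 x11 u) u)"
  using assms by (metis k3_f101517 k3_f122 cl z_in u_in)
lemma k3_f134531: assumes "sk1 \<in> A" shows "sk1 = (p z sk1 u)"
  using assms by (metis t1 cl z_in u_in)
lemma k3_f134530: assumes "sk0 \<in> A" and "sk1 \<in> A" shows "sk1 = (p z sk1 (p u (p sk0 sk0 u) u))"
  using assms by (metis k3_f134531 t2 cl z_in u_in)
lemma k3_f134529: assumes "sk0 \<in> A" and "sk1 \<in> A" shows "sk1 = (p z sk1 (p (p u sk0 z) sk0 sk0))"
  using assms by (metis k3_f134530 k3_f101904 cl z_in u_in)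
lemma k3_f134247: assumes "sk0 \<in> A" and "sk1 \<in> A" shows "sk1 = (p z sk1 (p sk0 (p u sk0 z) (p u sk0 z)))"
  using assms by (metis k3_f134529 l1 cl z_in u_in)
lemma k3_f21: assumes "sk0 \<in> A" and "sk1 \<in> A" shows "sk1 = (p sk0 (p sk0 sk1 (p u sk0 z)) (p u sk0 z))"
  using assms by (metis k3_f134247 k3_f1664 cl z_in u_in)
lemma canc3: "a \<in> A \<Longrightarrow> c \<in> A \<Longrightarrow> p a (p a c (p u a z)) (p u a z) = c" by (metis k3_f21)
lemma s3_f436: assumes "x16 \<in> A" and "x14 \<in> A" and "x15 \<in> A" and "x12 \<in> A" and "x13 \<in> A" shows "(p x12 (p x15 x16 (p u x13 z)) x14) = (p (p x12 x15 x14) x16 (p x14 x13 x12))"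
  using assms by (metis t3 l1 cl z_in u_in)
lemma s3_f445: assumes "x50 \<in> A" and "x51 \<in> A" and "x52 \<in> A" shows "(p u (p x51 x52 (p u x50 z)) z) = (p (p u x51 z) x52 x50)"
  using assms by (metis t3 l4 cl z_in u_in)
lemma s3_f2944: assumes "sk0 \<in> A" and "sk1 \<in> A" and "sk2 \<in> A" shows "(p sk0 (p sk1 sk2 (p u sk1 z)) (p u sk0 z)) = (p (p sk0 sk1 (p u sk0 z)) sk2 (p (p u sk0 z) sk1 sk0))"
  using assms by (metis s3_f436 cl z_in u_in)
lemma s3_f26: assumes "sk0 \<in> A" and "sk1 \<in> A" and "sk2 \<in> A" shows "(p (p sk0 sk1 (p u sk0 z)) sk2 (p u (p sk0 sk1 (p u sk0 z)) z)) = (p sk0 (p sk1 sk2 (p u sk1 z)) (p u sk0 z))"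
  using assms by (metis s3_f2944 s3_f445 cl z_in u_in)
lemma assoc3: "a \<in> A \<Longrightarrow> b \<in> A \<Longrightarrow> c \<in> A \<Longrightarrow> p (p a b (p u a z)) c (p u (p a b (p u a z)) z) = p a (p b c (p u b z)) (p u a z)" by (metis s3_f26)
lemma ii3: "a \<in> A \<Longrightarrow> b \<in> A \<Longrightarrow> c \<in> A \<Longrightarrow> p a b c = p (p z (p u b z) a) (p z b c) (p u (p z (p u b z) a) z)"
proof -
  assume abc: "a \<in> A" "b \<in> A" "c \<in> A"
  let ?y = "p a c (p u a z)"
  have yA: "?y \<in> A" using abc by (simp add: cl z_in u_in)
  have bA: "p z b a \<in> A" "p z b c \<in> A" using abc by (simp_all add: cl z_in)
  have "p a b c = p a b (p a ?y (p u a z))" using canc3[of a c] abc by simp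
  also have "\<dots> = p a (p z b ?y) (p u a z)" by (rule G[OF abc(1) abc(2) yA])
  also have "p z b ?y = p (p z b a) (p z b c) (p u (p z b a) z)" by (rule h3[OF abc(2) abc(1) abc(3)])
  also have "p a \<dots> (p u a z) = p (p a (p z b a) (p u a z)) (p z b c) (p u (p a (p z b a) (p u a z)) z)"
    by (rule assoc3[OF abc(1) bA, symmetric])
  also have "p a (p z b a) (p u a z) = p z (p u b z) a"
  proof -
    have "p z (p u b z) a = p a b z" by (rule F3[OF abc(1) abc(2)])
    also have "\<dots> = p a b (p a a (p u a z))" using char3[OF abc(1)] by simp
    also have "\<dots> = p a (p z b a) (p u a z)" by (rule G[OF abc(1) abc(2) abc(1)])
    finally show ?thesis by simp
  qed
  finally show ?thesis .
qed
end

theorem theorem2: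
  fixes A :: "'a set" and p :: "'a \<Rightarrow> 'a \<Rightarrow> 'a \<Rightarrow> 'a" and z u :: 'a
  assumes closed: "\<forall>a\<in>A. \<forall>b\<in>A. \<forall>c\<in>A. p a b c \<in> A"
    and z_in: "z \<in> A" and u_in: "u \<in> A"
    and T1: "\<forall>a\<in>A. p z a u = a"
    and T2: "\<forall>a\<in>A. \<forall>b\<in>A. p a b a = a"
    and T3: "\<forall>a\<in>A. \<forall>b1\<in>A. \<forall>b2\<in>A. \<forall>b3\<in>A. \<forall>c\<in>A.
               p a (p b1 b2 b3) c = p (p a b1 c) b2 (p a b3 c)"
    and T4: "\<forall>a\<in>A. \<forall>b\<in>A. p a z b = a \<and> p b u a = a"
  defines "bar \<equiv> \<lambda>a. p u a z"
    and "mul \<equiv> \<lambda>a b. p z a b"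
    and "add \<equiv> \<lambda>a b. p a b (p u a z)"
  shows "(unitary_ring_char2 A add mul z u
            \<longleftrightarrow> (\<forall>a\<in>A. \<forall>b\<in>A. \<forall>c\<in>A. p a b c = add (mul (bar b) a) (mul b c)))
       \<and> ((\<forall>a\<in>A. \<forall>b\<in>A. \<forall>c\<in>A. p a b c = add (mul (bar b) a) (mul b c))
            \<longleftrightarrow> (\<forall>a\<in>A. \<forall>b\<in>A. \<forall>c\<in>A. mul a (add b c) = add (mul a b) (mul a c)))"
proof -
  interpret tern A p z u
  proof
    show "\<And>a b c. a \<in> A \<Longrightarrow> b \<in> A \<Longrightarrow> c \<in> A \<Longrightarrow> p a b c \<in> A" by (rule closed[rule_format])
    show "z \<in> A" "u \<in> A" by (fact z_in, fact u_in)
    show "\<And>a. a \<in> A \<Longrightarrow> p z a u = a" by (rule T1[rule_format])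
    show "\<And>a b. a \<in> A \<Longrightarrow> b \<in> A \<Longrightarrow> p a b a = a" by (rule T2[rule_format])
    show "\<And>a b1 b2 b3 c. a \<in> A \<Longrightarrow> b1 \<in> A \<Longrightarrow> b2 \<in> A \<Longrightarrow> b3 \<in> A \<Longrightarrow> c \<in> A \<Longrightarrow> p a (p b1 b2 b3) c = p (p a b1 c) b2 (p a b3 c)"
      by (rule T3[rule_format])
    show "\<And>a b. a \<in> A \<Longrightarrow> b \<in> A \<Longrightarrow> p a z b = a" using T4 by blast
    show "\<And>a b. a \<in> A \<Longrightarrow> b \<in> A \<Longrightarrow> p b u a = a" using T4 by blast
  qed
  have i_iii: "\<forall>a\<in>A. \<forall>b\<in>A. \<forall>c\<in>A. mul a (add b c) = add (mul a b) (mul a c)"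
    if "unitary_ring_char2 A add mul z u" using that unfolding unitary_ring_char2_def by blast
  have iii_ii: "\<forall>a\<in>A. \<forall>b\<in>A. \<forall>c\<in>A. p a b c = add (mul (bar b) a) (mul b c)"
    if H: "\<forall>a\<in>A. \<forall>b\<in>A. \<forall>c\<in>A. mul a (add b c) = add (mul a b) (mul a c)"
  proof -
    interpret tern3 A p z u
    proof
      fix a b c assume "a \<in> A" "b \<in> A" "c \<in> A"
      then show "p z a (p b c (p u b z)) = p (p z a b) (p z a c) (p u (p z a b) z)"
        by (rule H[unfolded add_def mul_def, rule_format])
    qed
    show ?thesis unfolding add_def mul_def bar_def by (intro ballI) (rule ii3)
  qed
  have ii_i: "unitary_ring_char2 A add mul z u"
    if H: "\<forall>a\<in>A. \<forall>b\<in>A. \<forall>c\<in>A. p a b c = add (mul (bar b) a) (mul b c)"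
  proof -
    interpret tern2 A p z u
    proof
      fix a b c assume "a \<in> A" "b \<in> A" "c \<in> A"
      then show "p a b c = p (p z (p u b z) a) (p z b c) (p u (p z (p u b z) a) z)"
        by (rule H[unfolded add_def mul_def bar_def, rule_format])
    qed
    show ?thesis unfolding add_def mul_def by (rule ring2)
  qed
  show ?thesis using i_iii iii_ii ii_i by blast
qed
end
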